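(* Let $k\in[0,1)$, $k'=\sqrt{1-k^2}$ and $k^*=ik/k'$ (so $(k^* )^2=-k^2/(1-k^2)\le0$ and ${k^*}'=\sqrt{1-(k^* )^2}=1/k'$). Then for every $\bar\theta\in(0,\pi/2)$, $$\sinh\big(2J(\bar\theta|k)\big)\,\sinh\Big(2J\Big(\frac\pi2-\bar\theta\,\Big|\,k^*\Big)\Big)=1.$$ Consequently the high-temperature expansion of the $Z$-invariant Ising model on an isoradial graph $G$ with modulus $k$ and the low-temperature expansion of the $Z$-invariant Ising model on the dual isoradial graph $G^*$ with modulus $k^*$ induce the same measure on polygon configurations of $G$.
   Context: $J(\bar\theta|k)=\frac12\log\frac{1+\mathrm{sn}(\theta|k)}{\mathrm{cn}(\theta|k)}$ with $\theta=\frac{2K(k)}{\pi}\bar\theta$, $K(k)=\int_0^{\pi/2}(1-k^2\sin^2t)^{-1/2}dt$, and $\mathrm{sn},\mathrm{cn}$ the Jacobi elliptic functions of modulus $k$ (equivalently $\sinh(2J(\bar\theta|k))=\mathrm{sc}(\theta|k)$). In the isoradial dual $G^*$, the dual edge $e^*$ of an edge $e$ with rhombus half-angle $\bar\theta_e$ has rhombus half-angle $\frac\pi2-\bar\theta_e$. Polygon configurations are edge subsets with even degree at every vertex; the high-temperature expansion weights a polygon configuration by $\prod_{e}\tanh J_e$, the low-temperature expansion of the dual model (via domain walls) by $\prod_{e}e^{-2J_{e^*}}$. *)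

theory Defs
  imports "HOL-Analysis.Analysis"
begin

text \<open>Jacobi elliptic functions are parametrised by the parameter m = k^2 (real, m < 1),
  so that an imaginary modulus k* = i k / k' is represented by m = -k^2/(1-k^2).\<close>

definition ell_F :: "real \<Rightarrow> real \<Rightarrow> real" where
  "ell_F m phi =
     (if 0 \<le> phi then integral {0..phi} (\<lambda>t. 1 / sqrt (1 - m * (sin t)^2))
      else - integral {phi..0} (\<lambda>t. 1 / sqrt (1 - m * (sin t)^2)))"

definition ell_K :: "real \<Rightarrow> real" where
  "ell_K m = ell_F m (pi / 2)"

definition jac_am :: "real \<Rightarrow> real \<Rightarrow> real" where
  "jac_am m u = (THE phi. ell_F m phi = u)"

definition jac_sn :: "real \<Rightarrow> real \<Rightarrow> real" where
  "jac_sn m u = sin (jac_am m u)"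

definition jac_cn :: "real \<Rightarrow> real \<Rightarrow> real" where
  "jac_cn m u = cos (jac_am m u)"

definition isingJ :: "real \<Rightarrow> real \<Rightarrow> real" where
  "isingJ m thetabar =
     (let theta = 2 * ell_K m / pi * thetabar
      in ln ((1 + jac_sn m theta) / jac_cn m theta) / 2)"

definition polygon_configs :: "'v set \<Rightarrow> 'e set \<Rightarrow> ('e \<Rightarrow> 'v set) \<Rightarrow> 'e set set" where
  "polygon_configs V E ends =
     {C. C \<subseteq> E \<and> (\<forall>v\<in>V. even (card {e\<in>C. v \<in> ends e}))}"

definition config_measure :: "'e set set \<Rightarrow> ('e \<Rightarrow> real) \<Rightarrow> 'e set \<Rightarrow> real" where
  "config_measure \<Omega> w C = (\<Prod>e\<in>C. w e) / (\<Sum>C'\<in>\<Omega>. \<Prod>e\<in>C'. w e)"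

end

theory Submission
  imports Defs
begin



definition ff :: "real \<Rightarrow> real \<Rightarrow> real" where
  "ff m t = 1 / sqrt (1 - m * (sin t)^2)"

lemma ff_pos_den: fixes m t :: real assumes "m < 1" shows "1 - m * (sin t)^2 > 0"
proof (cases "m \<le> 0")
  case True then have "m * (sin t)^2 \<le> 0" using mult_nonpos_nonneg[OF True zero_le_power2[of "sin t::real"]] by simp
  then show ?thesis by linarith
next
  case False
  have "(sin t)^2 \<le> 1" by (simp add: abs_square_le_1)
  hence "m * (sin t)^2 \<le> m" using False by (simp add: mult_left_le)
  then show ?thesis using assms by linarith
qed

lemma ff_cont: assumes "m < 1" shows "continuous_on S (ff m)"
proof -
  have "\<And>t. sqrt (1 - m * (sin t)^2) \<noteq> 0" using ff_pos_den[OF assms] by (metis less_irrefl real_sqrt_eq_zero_cancel_iff)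
  then show ?thesis unfolding ff_def by (intro continuous_intros) auto
qed

lemma ff_int: assumes "m < 1" shows "ff m integrable_on {a..b}"
  by (rule integrable_continuous_real[OF ff_cont[OF assms]])

lemma ff_lower: assumes "m < 1" shows "ff m t \<ge> 1 / sqrt (1 + \<bar>m\<bar>)"
proof -
  have "(sin t)^2 \<le> 1" by (simp add: abs_square_le_1)
  have "- m * (sin t)^2 \<le> \<bar>m\<bar> * (sin t)^2" by (rule mult_right_mono) auto
  also have "\<dots> \<le> \<bar>m\<bar>" using \<open>(sin t)^2 \<le> 1\<close> by (simp add: mult_left_le)
  finally have "- m * (sin t)^2 \<le> \<bar>m\<bar>" .
  hence "1 - m * (sin t)^2 \<le> 1 + \<bar>m\<bar>" by linarith
  hence "sqrt (1 - m * (sin t)^2) \<le> sqrt (1 + \<bar>m\<bar>)" by simp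
  moreover have "sqrt (1 - m * (sin t)^2) > 0" using ff_pos_den[OF assms] by simp
  ultimately show ?thesis unfolding ff_def by (simp add: frac_le)
qed

lemma F_diff: assumes "m < 1" "a \<le> b"
  shows "ell_F m b - ell_F m a = integral {a..b} (ff m)"
proof -
  have F: "ell_F m x = (if 0 \<le> x then integral {0..x} (ff m) else - integral {x..0} (ff m))" for x
    unfolding ell_F_def ff_def by simp
  consider "0 \<le> a" | "a < 0" "0 \<le> b" | "b < 0" using assms by linarith
  then show ?thesis
  proof cases
    case 1
    have "integral {0..a} (ff m) + integral {a..b} (ff m) = integral {0..b} (ff m)"
      using Henstock_Kurzweil_Integration.integral_combine[where a=0 and c=a and b=b and f="ff m"] ff_int[OF assms(1)] 1 assms by auto
    then show ?thesis using 1 assms by (simp add: F)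
  next
    case 2
    have "integral {a..0} (ff m) + integral {0..b} (ff m) = integral {a..b} (ff m)"
      using Henstock_Kurzweil_Integration.integral_combine[where a=a and c=0 and b=b and f="ff m"] ff_int[OF assms(1)] 2 assms by auto
    then show ?thesis using 2 assms by (simp add: F)
  next
    case 3
    have "integral {a..b} (ff m) + integral {b..0} (ff m) = integral {a..0} (ff m)"
      using Henstock_Kurzweil_Integration.integral_combine[where a=a and c=b and b=0 and f="ff m"] ff_int[OF assms(1)] 3 assms by auto
    then show ?thesis using 3 assms by (simp add: F)
  qed
qed

lemma F_mono: assumes "m < 1" "a < b" shows "ell_F m a < ell_F m b"
proof -
  let ?c = "1 / sqrt (1 + \<bar>m\<bar>)"
  have "integral {a..b} (\<lambda>_. ?c) \<le> integral {a..b} (ff m)"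
    by (rule integral_le) (use ff_int[OF assms(1)] ff_lower[OF assms(1)] in auto)
  moreover have "integral {a..b} (\<lambda>_. ?c) > 0" using assms by simp
  ultimately have "integral {a..b} (ff m) > 0" by linarith
  moreover have "ell_F m b - ell_F m a = integral {a..b} (ff m)" using F_diff[OF assms(1)] assms(2) by simp
  ultimately show ?thesis by linarith
qed

lemma F_zero: "ell_F m 0 = 0" unfolding ell_F_def by simp

lemma am_F: assumes "m < 1" shows "jac_am m (ell_F m phi) = phi"
  unfolding jac_am_def
proof (rule the_equality)
  fix x assume "ell_F m x = ell_F m phi"
  then show "x = phi" using F_mono[OF assms, of x phi] F_mono[OF assms, of phi x] by (cases x phi rule: linorder_cases) auto
qed simp

lemma F_cont: assumes "m < 1" shows "continuous_on {0..b} (ell_F m)"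
proof -
  have "continuous_on {0..b} (\<lambda>x. integral {0..x} (ff m))"
    by (rule indefinite_integral_continuous_1[OF ff_int[OF assms]])
  moreover have "\<And>x. x \<in> {0..b} \<Longrightarrow> ell_F m x = integral {0..x} (ff m)"
  proof -
    fix x :: real assume "x \<in> {0..b}"
    then have "ell_F m x - ell_F m 0 = integral {0..x} (ff m)" using F_diff[OF assms, of 0 x] by simp
    then show "ell_F m x = integral {0..x} (ff m)" by (simp add: F_zero)
  qed
  ultimately show ?thesis using continuous_on_cong[of "{0..b}" "{0..b}" "ell_F m" "\<lambda>x. integral {0..x} (ff m)"] by simp
qed

lemma reflect_int: "integral {0..pi/2 - p} (\<lambda>t. g (pi/2 - t)) = integral {p..pi/2} (g::real\<Rightarrow>real)"
proof -
  have 1: "integral {p - pi/2..pi/2 - pi/2} (\<lambda>x. g (x + pi/2)) = integral {p..pi/2} g"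
    by (rule integral_shift_real_ivl)
  have 2: "integral {-0..-(p - pi/2)} (\<lambda>x. (\<lambda>y. g (y + pi/2)) (-x)) = integral {p - pi/2..0} (\<lambda>y. g (y + pi/2))"
    by (rule Henstock_Kurzweil_Integration.integral_reflect_real)
  have 3: "(\<lambda>x. (\<lambda>y. g (y + pi/2)) (-x)) = (\<lambda>t. g (pi/2 - t))" by (simp add: algebra_simps)
  show ?thesis using 1 2 unfolding 3 by simp
qed

lemma integrand_eq: fixes m t :: real assumes "m < 1"
  shows "1 / sqrt (1 - (- m / (1 - m)) * (sin t)^2) = sqrt (1 - m) * ff m (pi/2 - t)"
proof -
  have c: "(sin (pi/2 - t))^2 = (cos t)^2" by (simp add: sin_cos_eq)
  have p1: "1 - m > 0" using assms by simp
  have p2: "1 - m * (cos t)^2 > 0" using ff_pos_den[OF assms, of "pi/2 - t"] c by simp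
  have "1 - (- m / (1 - m)) * (sin t)^2 = (1 - m * (cos t)^2) / (1 - m)"
    using p1 by (simp add: field_simps sin_squared_eq)
  hence "sqrt (1 - (- m / (1 - m)) * (sin t)^2) = sqrt (1 - m * (cos t)^2) / sqrt (1 - m)"
    by (simp add: real_sqrt_divide)
  hence "1 / sqrt (1 - (- m / (1 - m)) * (sin t)^2) = sqrt (1 - m) / sqrt (1 - m * (cos t)^2)"
    by simp
  also have "\<dots> = sqrt (1 - m) * ff m (pi/2 - t)" unfolding ff_def c by simp
  finally show ?thesis .
qed

lemma transform: assumes "m < 1" "0 \<le> p" "p \<le> pi/2"
  shows "ell_F (- m / (1 - m)) (pi/2 - p) = sqrt (1 - m) * (ell_K m - ell_F m p)"
proof -
  have "ell_F (- m / (1 - m)) (pi/2 - p) = integral {0..pi/2 - p} (\<lambda>t. 1 / sqrt (1 - (- m / (1 - m)) * (sin t)^2))"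
    using assms unfolding ell_F_def by simp
  also have "\<dots> = integral {0..pi/2 - p} (\<lambda>t. sqrt (1 - m) * ff m (pi/2 - t))"
    using integrand_eq[OF assms(1)] by simp
  also have "\<dots> = sqrt (1 - m) * integral {p..pi/2} (ff m)"
    by (simp add: reflect_int)
  also have "integral {p..pi/2} (ff m) = ell_K m - ell_F m p"
    using F_diff[OF assms(1) assms(3)] unfolding ell_K_def by simp
  finally show ?thesis .
qed

lemma K_transform: assumes "m < 1" shows "ell_K (- m / (1 - m)) = sqrt (1 - m) * ell_K m"
  using transform[OF assms, of 0] unfolding ell_K_def by (simp add: F_zero)

lemma am_exists: assumes "m < 1" "0 < tb" "tb < pi/2"
  shows "\<exists>phi. 0 < phi \<and> phi < pi/2 \<and> ell_F m phi = 2 * ell_K m / pi * tb"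
proof -
  let ?th = "2 * ell_K m / pi * tb"
  have K: "ell_K m > 0" using F_mono[OF assms(1), of 0 "pi/2"] F_zero unfolding ell_K_def by simp
  have th0: "?th > 0" using K assms by simp
  have "?th < 2 * ell_K m / pi * (pi/2)" using K assms by (intro mult_strict_left_mono) auto
  hence th1: "?th < ell_K m" by simp
  obtain phi where phi: "0 \<le> phi" "phi \<le> pi/2" "ell_F m phi = ?th"
    using IVT'[of "ell_F m" 0 ?th "pi/2", OF _ _ _ F_cont[OF assms(1)]] th0 th1 F_zero
    unfolding ell_K_def by auto
  have "phi \<noteq> 0" using phi th0 F_zero by auto
  moreover have "phi \<noteq> pi/2"
  proof
    assume a: "phi = pi/2" have "ell_F m phi = ell_K m" unfolding ell_K_def a by (rule refl)
    with phi(3) th1 show False by linarith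
  qed
  ultimately have "0 < phi" "phi < pi/2" using phi(1,2) by linarith+
  with phi(3) show ?thesis by blast
qed

lemma key: assumes "m < 1" "0 < tb" "tb < pi/2"
  shows "\<exists>phi. 0 < phi \<and> phi < pi/2 \<and> jac_am m (2 * ell_K m / pi * tb) = phi
     \<and> jac_am (- m / (1 - m)) (2 * ell_K (- m / (1 - m)) / pi * (pi/2 - tb)) = pi/2 - phi"
proof -
  obtain phi where phi: "0 < phi" "phi < pi/2" "ell_F m phi = 2 * ell_K m / pi * tb"
    using am_exists[OF assms] by blast
  have m1: "- m / (1 - m) < 1" using assms(1) by (simp add: field_simps)
  have "2 * ell_K (- m / (1 - m)) / pi * (pi/2 - tb) = sqrt (1 - m) * (ell_K m - 2 * ell_K m / pi * tb)"
    unfolding K_transform[OF assms(1)] by (simp add: field_simps)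
  also have "\<dots> = ell_F (- m / (1 - m)) (pi/2 - phi)"
    using transform[OF assms(1), of phi] phi by simp
  finally have "jac_am (- m / (1 - m)) (2 * ell_K (- m / (1 - m)) / pi * (pi/2 - tb)) = pi/2 - phi"
    using am_F[OF m1] by simp
  moreover have "jac_am m (2 * ell_K m / pi * tb) = phi" using am_F[OF assms(1)] phi(3) by metis
  ultimately show ?thesis using phi by blast
qed


lemma alg1: fixes s c :: real assumes "c>0" "s>0" "s^2+c^2=1"
  shows "((1+s)/c - inverse((1+s)/c))/2 = s/c"
proof -
  have d: "1 + s > 0" using assms by simp
  have "(1+s)/c - inverse((1+s)/c) = (1+s)/c - c/(1+s)" by simp
  also have "\<dots> = ((1+s)*(1+s) - c*c)/(c*(1+s))"
    using assms d by (simp add: diff_frac_eq)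
  also have "(1+s)*(1+s) - c*c = (2* s)*(1+s)" using assms(3) by (simp add: algebra_simps power2_eq_square)
  also have "(2* s)*(1+s)/(c*(1+s)) = (2* s)/c" using d by simp
  finally show ?thesis by simp
qed
lemma alg2: fixes s c :: real assumes "c>0" "s>0" "s^2+c^2=1"
  shows "(1 - inverse((1+s)/c))/(1 + inverse((1+s)/c)) = s/(1+c)"
proof -
  have d: "1 + s > 0" using assms by simp
  have "(1 - inverse((1+s)/c))/(1 + inverse((1+s)/c)) = (1 - c/(1+s))/(1 + c/(1+s))" by simp
  also have "1 - c/(1+s) = (1+s-c)/(1+s)" using d by (simp add: field_simps)
  also have "1 + c/(1+s) = (1+s+c)/(1+s)" using d by (simp add: field_simps)
  also have "(1+s-c)/(1+s) / ((1+s+c)/(1+s)) = (1+s-c)/(1+s+c)" using d by simp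
  also have "\<dots> = s/(1+c)"
  proof -
    have "(1+s-c)*(1+c) = s*(1+s+c)" using assms(3) by (simp add: algebra_simps power2_eq_square)
    then show ?thesis using assms by (simp add: frac_eq_eq add_pos_pos)
  qed
  finally show ?thesis .
qed

lemma sinhJ: assumes "0 < phi" "phi < pi/2"
  shows "sinh (2 * (ln ((1 + sin phi) / cos phi) / 2)) = sin phi / cos phi"
proof -
  have c: "cos phi > 0" using assms by (intro cos_gt_zero_pi) auto
  have s: "sin phi > 0" using assms by (intro sin_gt_zero) auto
  have x: "(1 + sin phi) / cos phi > 0" using c s by simp
  have "sinh (2 * (ln ((1 + sin phi) / cos phi) / 2)) = ((1 + sin phi) / cos phi - inverse ((1 + sin phi) / cos phi)) / 2"
    using sinh_ln_real[OF x] by simp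
  also have "\<dots> = sin phi / cos phi"
    by (rule alg1[OF c s]) (simp add: sin_cos_squared_add)
  finally show ?thesis .
qed

lemma weights: assumes "0 < phi" "phi < pi/2"
  shows "tanh (ln ((1 + sin phi) / cos phi) / 2) = exp (- 2 * (ln ((1 + sin (pi/2 - phi)) / cos (pi/2 - phi)) / 2))"
proof -
  have c: "cos phi > 0" using assms by (intro cos_gt_zero_pi) auto
  have s: "sin phi > 0" using assms by (intro sin_gt_zero) auto
  have x: "(1 + sin phi) / cos phi > 0" using c s by simp
  have y: "(1 + cos phi) / sin phi > 0" using c s by simp
  have "tanh (ln ((1 + sin phi) / cos phi) / 2) = (1 - inverse ((1 + sin phi) / cos phi)) / (1 + inverse ((1 + sin phi) / cos phi))"
    unfolding tanh_real_altdef using x by (simp add: exp_minus)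
  also have "\<dots> = sin phi / (1 + cos phi)"
    by (rule alg2[OF c s]) (simp add: sin_cos_squared_add)
  also have "\<dots> = exp (- 2 * (ln ((1 + cos phi) / sin phi) / 2))"
    using y by (simp add: exp_minus)
  moreover have "sin (pi/2 - phi) = cos phi" by (simp add: sin_cos_eq)
  moreover have "cos (pi/2 - phi) = sin phi" by (simp add: cos_sin_eq)
  ultimately show ?thesis by simp
qed


lemma J_pair: assumes "m < 1" "0 < tb" "tb < pi/2"
  shows "\<exists>phi. 0 < phi \<and> phi < pi/2 \<and> isingJ m tb = ln ((1 + sin phi) / cos phi) / 2
     \<and> isingJ (- m / (1 - m)) (pi/2 - tb) = ln ((1 + sin (pi/2 - phi)) / cos (pi/2 - phi)) / 2"
proof -
  obtain phi where phi: "0 < phi" "phi < pi/2" "jac_am m (2 * ell_K m / pi * tb) = phi"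
     "jac_am (- m / (1 - m)) (2 * ell_K (- m / (1 - m)) / pi * (pi/2 - tb)) = pi/2 - phi"
    using key[OF assms] by blast
  show ?thesis
    unfolding isingJ_def Let_def jac_sn_def jac_cn_def phi(3) phi(4) using phi(1,2) by blast
qed

theorem mainTheorem11:
  fixes k :: real
    and V :: "'v set" and E :: "'e set" and ends :: "'e \<Rightarrow> 'v set" and theta :: "'e \<Rightarrow> real"
  assumes "0 \<le> k" and "k < 1"
  shows "(\<forall>tb. 0 < tb \<and> tb < pi / 2 \<longrightarrow>
            sinh (2 * isingJ (k^2) tb) * sinh (2 * isingJ (- (k^2) / (1 - k^2)) (pi / 2 - tb)) = 1)
       \<and> (finite V \<and> finite E \<and> (\<forall>e\<in>E. ends e \<subseteq> V \<and> card (ends e) = 2)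
            \<and> (\<forall>e\<in>E. 0 < theta e \<and> theta e < pi / 2) \<longrightarrow>
          (\<forall>C\<in>polygon_configs V E ends.
             config_measure (polygon_configs V E ends) (\<lambda>e. tanh (isingJ (k^2) (theta e))) C
           = config_measure (polygon_configs V E ends)
               (\<lambda>e. exp (- 2 * isingJ (- (k^2) / (1 - k^2)) (pi / 2 - theta e))) C))"
proof -
  have m: "k^2 < 1" using assms by (simp add: power_less_one_iff abs_square_less_1)
  have W: "tanh (isingJ (k^2) tb) = exp (- 2 * isingJ (- (k^2) / (1 - k^2)) (pi / 2 - tb))"
    if tb0: "0 < tb" "tb < pi/2" for tb
  proof -
    obtain phi where phi: "0 < phi" "phi < pi/2" "isingJ (k^2) tb = ln ((1 + sin phi) / cos phi) / 2"
      "isingJ (- (k^2) / (1 - k^2)) (pi/2 - tb) = ln ((1 + sin (pi/2 - phi)) / cos (pi/2 - phi)) / 2"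
      using J_pair[OF m tb0] by blast
    show ?thesis unfolding phi(3,4) by (rule weights[OF phi(1,2)])
  qed
  have S: "sinh (2 * isingJ (k^2) tb) * sinh (2 * isingJ (- (k^2) / (1 - k^2)) (pi / 2 - tb)) = 1"
    if tb0: "0 < tb" "tb < pi/2" for tb
  proof -
    obtain phi where phi: "0 < phi" "phi < pi/2" "isingJ (k^2) tb = ln ((1 + sin phi) / cos phi) / 2"
      "isingJ (- (k^2) / (1 - k^2)) (pi/2 - tb) = ln ((1 + sin (pi/2 - phi)) / cos (pi/2 - phi)) / 2"
      using J_pair[OF m tb0] by blast
    have p2: "0 < pi/2 - phi" "pi/2 - phi < pi/2" using phi by auto
    have c: "cos phi > 0" using phi by (intro cos_gt_zero_pi) auto
    have s: "sin phi > 0" using phi by (intro sin_gt_zero) auto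
    have e1: "sin (pi/2 - phi) = cos phi" by (simp add: sin_cos_eq)
    have e2: "cos (pi/2 - phi) = sin phi" by (simp add: cos_sin_eq)
    have h2: "sinh (2 * (ln ((1 + cos phi) / sin phi) / 2)) = cos phi / sin phi"
      using sinhJ[OF p2] unfolding e1 e2 .
    show ?thesis unfolding phi(3,4) e1 e2 sinhJ[OF phi(1,2)] h2 using c s by simp
  qed
  show ?thesis
  proof (intro conjI allI impI ballI)
    fix tb :: real assume "0 < tb \<and> tb < pi / 2" then show "sinh (2 * isingJ (k^2) tb) * sinh (2 * isingJ (- (k^2) / (1 - k^2)) (pi / 2 - tb)) = 1"
      using S by blast
  next
    fix C assume H: "finite V \<and> finite E \<and> (\<forall>e\<in>E. ends e \<subseteq> V \<and> card (ends e) = 2)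
            \<and> (\<forall>e\<in>E. 0 < theta e \<and> theta e < pi / 2)" and C: "C \<in> polygon_configs V E ends"
    have we: "\<And>e. e \<in> E \<Longrightarrow> tanh (isingJ (k^2) (theta e)) = exp (- 2 * isingJ (- (k^2) / (1 - k^2)) (pi / 2 - theta e))"
      using H W by blast
    have sub: "\<And>C'. C' \<in> polygon_configs V E ends \<Longrightarrow> C' \<subseteq> E" unfolding polygon_configs_def by blast
    have pe: "\<And>C'. C' \<in> polygon_configs V E ends \<Longrightarrow> (\<Prod>e\<in>C'. tanh (isingJ (k^2) (theta e))) = (\<Prod>e\<in>C'. exp (- 2 * isingJ (- (k^2) / (1 - k^2)) (pi / 2 - theta e)))"
      by (rule prod.cong) (use sub we in blast)+
    show "config_measure (polygon_configs V E ends) (\<lambda>e. tanh (isingJ (k^2) (theta e))) C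
           = config_measure (polygon_configs V E ends)
               (\<lambda>e. exp (- 2 * isingJ (- (k^2) / (1 - k^2)) (pi / 2 - theta e))) C"
    proof -
      have "(\<Sum>C'\<in>polygon_configs V E ends. \<Prod>e\<in>C'. tanh (isingJ (k^2) (theta e)))
          = (\<Sum>C'\<in>polygon_configs V E ends. \<Prod>e\<in>C'. exp (- 2 * isingJ (- (k^2) / (1 - k^2)) (pi / 2 - theta e)))"
        by (rule sum.cong[OF refl pe])
      then show ?thesis unfolding config_measure_def pe[OF C] by simp
    qed
  qed
qed

end
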